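(* Let $B$ be a commutative ring with identity and $A$ a subring of $B$ containing the identity. Suppose $A$ is a pm-ring, $A$ is a dense subring of $B$, and $A$ is a weak completely normal subring of $B$. Then the maximal spectrum $\operatorname{Max}(A)$ is homeomorphic to $\operatorname{Max}(B)$.
   Context: All rings are commutative with identity; subrings contain the identity. $\operatorname{spec} R$ is the set of prime ideals of $R$ with the Zariski topology, and $\operatorname{Max}(R)$ is the subspace of maximal ideals. A pm-ring is a ring in which every prime ideal is contained in a unique maximal ideal. A subring $A$ of $B$ is dense in $B$ if for every ideal $I$ of $B$ and every $b\in B\setminus \operatorname{rad}(I)$ there exists $a\in B\setminus\operatorname{rad}(I)$ with $ab\in A$. A subring $A$ of $B$ is a weak completely normal subring of $B$ if for any two distinct maximal ideals $M\neq M'$ of $B$ such that $M\cap A$ and $M'\cap A$ are non-comparable (under inclusion), $\operatorname{cl}_{\operatorname{spec} A}\{M\cap A\}\cap \operatorname{cl}_{\operatorname{spec} A}\{M'\cap A\}=\emptyset$. *)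

theory Defs
  imports "HOL-Analysis.Analysis" "HOL-Algebra.Algebra"
begin

definition Spec :: "('a, 'b) ring_scheme \<Rightarrow> 'a set set" where
  "Spec R = {P. primeideal P R}"

definition MaxSpec :: "('a, 'b) ring_scheme \<Rightarrow> 'a set set" where
  "MaxSpec R = {M. maximalideal M R}"

definition zariski_V :: "('a, 'b) ring_scheme \<Rightarrow> 'a set \<Rightarrow> 'a set set" where
  "zariski_V R S = {P \<in> Spec R. S \<subseteq> P}"

text \<open>The Zariski topology on Spec R: its open sets are the complements Spec R - V(S),
  S a subset of R (these already form a topology; we take the topology they generate).\<close>
definition zariski :: "('a, 'b) ring_scheme \<Rightarrow> 'a set topology" where
  "zariski R = topology_generated_by {Spec R - zariski_V R S | S. S \<subseteq> carrier R}"

definition max_zariski :: "('a, 'b) ring_scheme \<Rightarrow> 'a set topology" where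
  "max_zariski R = subtopology (zariski R) (MaxSpec R)"

definition ring_rad :: "('a, 'b) ring_scheme \<Rightarrow> 'a set \<Rightarrow> 'a set" where
  "ring_rad R I = {x \<in> carrier R. \<exists>n::nat. x [^]\<^bsub>R\<^esub> n \<in> I}"

definition pm_ring :: "('a, 'b) ring_scheme \<Rightarrow> bool" where
  "pm_ring R \<longleftrightarrow> (\<forall>P. primeideal P R \<longrightarrow> (\<exists>!M. maximalideal M R \<and> P \<subseteq> M))"

definition dense_subring :: "'a set \<Rightarrow> ('a, 'b) ring_scheme \<Rightarrow> bool" where
  "dense_subring A B \<longleftrightarrow>
     (\<forall>I b. ideal I B \<longrightarrow> b \<in> carrier B - ring_rad B I \<longrightarrow>
        (\<exists>a \<in> carrier B - ring_rad B I. a \<otimes>\<^bsub>B\<^esub> b \<in> A))"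

definition weak_completely_normal_subring :: "'a set \<Rightarrow> ('a, 'b) ring_scheme \<Rightarrow> bool" where
  "weak_completely_normal_subring A B \<longleftrightarrow>
     (\<forall>M M'. maximalideal M B \<longrightarrow> maximalideal M' B \<longrightarrow> M \<noteq> M' \<longrightarrow>
        \<not> (M \<inter> A \<subseteq> M' \<inter> A) \<longrightarrow> \<not> (M' \<inter> A \<subseteq> M \<inter> A) \<longrightarrow>
        (zariski (B\<lparr>carrier := A\<rparr>) closure_of {M \<inter> A}) \<inter>
        (zariski (B\<lparr>carrier := A\<rparr>) closure_of {M' \<inter> A}) = {})"

end

theory Submission
  imports Defs
begin


lemma (in cring) zorn_core:
  assumes I: "ideal I R" and S: "S \<subseteq> carrier R" and IS: "I \<inter> S = {}"
  shows "\<exists>P. ideal P R \<and> I \<subseteq> P \<and> P \<inter> S = {} \<and> (\<forall>J. ideal J R \<longrightarrow> P \<subseteq> J \<longrightarrow> J \<inter> S = {} \<longrightarrow> J = P)"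
proof -
  define AA where "AA = {J. ideal J R \<and> I \<subseteq> J \<and> J \<inter> S = {}}"
  have "\<exists>M\<in>AA. \<forall>Y\<in>AA. M \<subseteq> Y \<longrightarrow> Y = M"
  proof (rule subset_Zorn)
    fix C assume C: "subset.chain AA C"
    show "\<exists>U\<in>AA. \<forall>Y\<in>C. Y \<subseteq> U"
    proof (cases "C = {}")
      case True then show ?thesis using I IS unfolding AA_def by auto
    next
      case False
      have ch: "subset.chain {J. ideal J R} C" using C unfolding pred_on.chain_def AA_def by auto
      have "ideal (\<Union>C) R" using chain_Union_is_ideal[OF ch] False by simp
      moreover have "I \<subseteq> \<Union>C" using False C unfolding pred_on.chain_def AA_def by blast
      moreover have "\<Union>C \<inter> S = {}" using C unfolding pred_on.chain_def AA_def by auto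
      ultimately show ?thesis unfolding AA_def by (intro bexI[of _ "\<Union>C"]) auto
    qed
  qed
  then obtain M where M: "M \<in> AA" and mx: "\<And>Y. Y \<in> AA \<Longrightarrow> M \<subseteq> Y \<Longrightarrow> Y = M" by blast
  have "\<forall>J. ideal J R \<longrightarrow> M \<subseteq> J \<longrightarrow> J \<inter> S = {} \<longrightarrow> J = M"
  proof (intro allI impI)
    fix J assume "ideal J R" "M \<subseteq> J" "J \<inter> S = {}"
    moreover have "I \<subseteq> J" using M \<open>M \<subseteq> J\<close> unfolding AA_def by blast
    ultimately show "J = M" using mx unfolding AA_def by blast
  qed
  then show ?thesis using M unfolding AA_def by blast
qed

lemma (in cring) ideal_add_elem:
  assumes P: "ideal P R" and a: "a \<in> carrier R"
  shows "ideal {y. \<exists>p\<in>P. \<exists>r\<in>carrier R. y = p \<oplus> a \<otimes> r} R"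
proof -
  interpret P: ideal P R by fact
  define J where "J = {y. \<exists>p\<in>P. \<exists>r\<in>carrier R. y = p \<oplus> a \<otimes> r}"
  have mem: "p \<oplus> a \<otimes> r \<in> J" if "p \<in> P" "r \<in> carrier R" for p r
    unfolding J_def using that by blast
  have memE: "\<exists>p r. p \<in> P \<and> p \<in> carrier R \<and> r \<in> carrier R \<and> y = p \<oplus> a \<otimes> r" if "y \<in> J" for y
    using that P.Icarr unfolding J_def by blast
  have "ideal J R"
  proof (rule idealI)
    show "ring R" by (rule ring_axioms)
    show "subgroup J (add_monoid R)"
    proof (rule add.subgroupI)
      show "J \<subseteq> carrier R" using a P.Icarr unfolding J_def by auto
      have "\<zero> \<oplus> a \<otimes> \<zero> \<in> J" by (rule mem) (auto simp: P.zero_closed)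
      then show "J \<noteq> {}" by blast
    next
      fix y assume "y \<in> J"
      then obtain p r where pr: "p \<in> P" "p \<in> carrier R" "r \<in> carrier R" "y = p \<oplus> a \<otimes> r" using memE by blast
      have "\<ominus> (p \<oplus> a \<otimes> r) = (\<ominus> p) \<oplus> a \<otimes> (\<ominus> r)" using pr a by algebra
      moreover have "(\<ominus> p) \<oplus> a \<otimes> (\<ominus> r) \<in> J" using pr by (intro mem) (auto simp: P.a_inv_closed)
      ultimately show "\<ominus> y \<in> J" using pr by simp
    next
      fix y z assume "y \<in> J" "z \<in> J"
      then obtain p r p' r' where pr: "p \<in> P" "p \<in> carrier R" "r \<in> carrier R" "y = p \<oplus> a \<otimes> r"
        "p' \<in> P" "p' \<in> carrier R" "r' \<in> carrier R" "z = p' \<oplus> a \<otimes> r'" using memE by meson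
      have "(p \<oplus> a \<otimes> r) \<oplus> (p' \<oplus> a \<otimes> r') = (p \<oplus> p') \<oplus> a \<otimes> (r \<oplus> r')" using pr a by algebra
      moreover have "(p \<oplus> p') \<oplus> a \<otimes> (r \<oplus> r') \<in> J" using pr by (intro mem) (auto simp: P.a_closed)
      ultimately show "y \<oplus> z \<in> J" using pr by simp
    qed
  next
    fix y x assume "y \<in> J" and x: "x \<in> carrier R"
    then obtain p r where pr: "p \<in> P" "p \<in> carrier R" "r \<in> carrier R" "y = p \<oplus> a \<otimes> r" using memE by blast
    have "x \<otimes> (p \<oplus> a \<otimes> r) = (x \<otimes> p) \<oplus> a \<otimes> (x \<otimes> r)" using pr a x by algebra
    moreover have "(x \<otimes> p) \<oplus> a \<otimes> (x \<otimes> r) \<in> J" using pr x by (intro mem) (auto simp: P.I_l_closed)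
    ultimately show "x \<otimes> y \<in> J" using pr by simp
  next
    fix y x assume "y \<in> J" and x: "x \<in> carrier R"
    then obtain p r where pr: "p \<in> P" "p \<in> carrier R" "r \<in> carrier R" "y = p \<oplus> a \<otimes> r" using memE by blast
    have "(p \<oplus> a \<otimes> r) \<otimes> x = (p \<otimes> x) \<oplus> a \<otimes> (r \<otimes> x)" using pr a x by algebra
    moreover have "(p \<otimes> x) \<oplus> a \<otimes> (r \<otimes> x) \<in> J" using pr x by (intro mem) (auto simp: P.I_r_closed)
    ultimately show "y \<otimes> x \<in> J" using pr by simp
  qed
  then show ?thesis unfolding J_def .
qed

lemma (in cring) zorn_prime:
  assumes I: "ideal I R" and S: "S \<subseteq> carrier R" and IS: "I \<inter> S = {}" and one: "\<one> \<in> S"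
    and mult: "\<And>x y. x \<in> S \<Longrightarrow> y \<in> S \<Longrightarrow> x \<otimes> y \<in> S"
  shows "\<exists>P. primeideal P R \<and> I \<subseteq> P \<and> P \<inter> S = {}"
proof -
  obtain P where P: "ideal P R" "I \<subseteq> P" "P \<inter> S = {}"
    and mx: "\<And>J. ideal J R \<Longrightarrow> P \<subseteq> J \<Longrightarrow> J \<inter> S = {} \<Longrightarrow> J = P"
    using zorn_core[OF I S IS] by blast
  interpret P: ideal P R by (rule P(1))
  have key: "\<exists>p\<in>P. \<exists>r\<in>carrier R. p \<oplus> a \<otimes> r \<in> S" if a: "a \<in> carrier R" "a \<notin> P" for a
  proof (rule ccontr)
    assume nex: "\<not> ?thesis"
    let ?J = "{y. \<exists>p\<in>P. \<exists>r\<in>carrier R. y = p \<oplus> a \<otimes> r}"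
    have J: "ideal ?J R" by (rule ideal_add_elem[OF P(1) a(1)])
    have mem: "p \<oplus> a \<otimes> r \<in> ?J" if "p \<in> P" "r \<in> carrier R" for p r
      using that by blast
    have "P \<subseteq> ?J"
    proof
      fix p assume "p \<in> P"
      then have "p \<oplus> a \<otimes> \<zero> \<in> ?J" by (intro mem) auto
      then show "p \<in> ?J" using a P.Icarr[OF \<open>p\<in>P\<close>] by simp
    qed
    moreover have "?J \<inter> S = {}"
    proof -
      { fix y assume y: "y \<in> ?J" "y \<in> S"
        then obtain p r where pr: "p\<in>P" "r\<in>carrier R" "y = p \<oplus> a \<otimes> r" by blast
        then have "p \<oplus> a \<otimes> r \<in> S" using y(2) by simp
        then have False using nex pr(1,2) by blast }
      then show ?thesis by blast
    qed
    ultimately have JP: "?J = P" using mx[OF J] by simp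
    have "\<zero> \<oplus> a \<otimes> \<one> \<in> ?J" by (intro mem) (auto simp: P.zero_closed)
    then have "a \<in> ?J" using a by simp
    then show False using JP a(2) by simp
  qed
  have "primeideal P R"
  proof (rule primeidealI[OF P(1) is_cring])
    show "carrier R \<noteq> P" using one P(3) S by blast
    fix a b assume ab: "a \<in> carrier R" "b \<in> carrier R" "a \<otimes> b \<in> P"
    show "a \<in> P \<or> b \<in> P"
    proof (rule ccontr)
      assume "\<not> ?thesis"
      then have "a \<notin> P" "b \<notin> P" by auto
      then obtain p1 r1 p2 r2 where pr: "p1 \<in> P" "r1 \<in> carrier R" "p1 \<oplus> a \<otimes> r1 \<in> S"
        "p2 \<in> P" "r2 \<in> carrier R" "p2 \<oplus> b \<otimes> r2 \<in> S"
        using key[of a] key[of b] ab(1,2) by blast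
      have pc: "p1 \<in> carrier R" "p2 \<in> carrier R" using pr P.Icarr by blast+
      have eq: "(p1 \<oplus> a \<otimes> r1) \<otimes> (p2 \<oplus> b \<otimes> r2) = p1 \<otimes> (p2 \<oplus> b \<otimes> r2) \<oplus> ((a \<otimes> r1) \<otimes> p2 \<oplus> (a \<otimes> b) \<otimes> (r1 \<otimes> r2))"
        using pr pc ab by algebra
      have "p1 \<otimes> (p2 \<oplus> b \<otimes> r2) \<in> P" using pr pc ab P.I_r_closed by simp
      moreover have "(a \<otimes> r1) \<otimes> p2 \<in> P" using pr pc ab P.I_l_closed by simp
      moreover have "(a \<otimes> b) \<otimes> (r1 \<otimes> r2) \<in> P" using pr pc ab P.I_r_closed by simp
      ultimately have "(p1 \<oplus> a \<otimes> r1) \<otimes> (p2 \<oplus> b \<otimes> r2) \<in> P" unfolding eq using P.a_closed by simp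
      moreover have "(p1 \<oplus> a \<otimes> r1) \<otimes> (p2 \<oplus> b \<otimes> r2) \<in> S" using mult pr by blast
      ultimately show False using P(3) by blast
    qed
  qed
  then show ?thesis using P by blast
qed

lemma (in cring) exists_maximal:
  assumes I: "ideal I R" and one: "\<one> \<notin> I"
  shows "\<exists>M. maximalideal M R \<and> I \<subseteq> M"
proof -
  obtain P where P: "ideal P R" "I \<subseteq> P" "P \<inter> {\<one>} = {}"
    and mx: "\<forall>J. ideal J R \<longrightarrow> P \<subseteq> J \<longrightarrow> J \<inter> {\<one>} = {} \<longrightarrow> J = P"
    using zorn_core[OF I, of "{\<one>}"] one by auto
  have "maximalideal P R"
  proof (rule maximalidealI[OF P(1)])
    show "carrier R \<noteq> P" using P(3) by auto
    fix J assume J: "ideal J R" "P \<subseteq> J" "J \<subseteq> carrier R"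
    show "J = P \<or> J = carrier R"
    proof (cases "\<one> \<in> J")
      case True then have "J = carrier R" using ideal.one_imp_carrier[OF J(1)] by blast
      then show ?thesis by simp
    next
      case False then have "J \<inter> {\<one>} = {}" by blast
      then show ?thesis using mx J(1,2) by simp
    qed
  qed
  with P show ?thesis by blast
qed

lemma (in cring) maximal_one_notin:
  assumes "maximalideal N R" shows "\<one> \<notin> N"
proof
  assume "\<one> \<in> N"
  then have "N = carrier R" using ideal.one_imp_carrier[OF maximalideal.axioms(1)[OF assms]] by blast
  then show False using maximalideal.I_notcarr[OF assms] by simp
qed

lemma (in cring) pm_separation:
  assumes pm: "pm_ring R" and N: "maximalideal N R" and N0: "maximalideal N0 R" and ne: "N \<noteq> N0"
  shows "\<exists>a\<in>carrier R - N0. \<exists>c\<in>carrier R - N. a \<otimes> c = \<zero>"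
proof (rule ccontr)
  assume H: "\<not> ?thesis"
  let ?S = "{a \<otimes> c | a c. a \<in> carrier R - N0 \<and> c \<in> carrier R - N}"
  have PN: "primeideal N R" "primeideal N0 R" using maximalideal_prime N N0 by auto
  have S: "?S \<subseteq> carrier R" by auto
  have IS: "{\<zero>} \<inter> ?S = {}"
  proof -
    { fix a c assume ac: "a \<in> carrier R - N0" "c \<in> carrier R - N" "\<zero> = a \<otimes> c"
      then have "a \<otimes> c = \<zero>" by simp
      then have False using H ac(1,2) by blast }
    then show ?thesis by blast
  qed
  have Smem: "a \<otimes> c \<in> ?S" if "a \<in> carrier R - N0" "c \<in> carrier R - N" for a c
    using that by blast
  have "\<one> \<otimes> \<one> \<in> ?S" using maximal_one_notin[OF N] maximal_one_notin[OF N0] by (intro Smem) auto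
  then have one: "\<one> \<in> ?S" by simp
  have mult: "x \<otimes> y \<in> ?S" if xy: "x \<in> ?S" "y \<in> ?S" for x y
  proof -
    obtain a1 c1 a2 c2 where ac: "x = a1 \<otimes> c1" "a1 \<in> carrier R - N0" "c1 \<in> carrier R - N"
      "y = a2 \<otimes> c2" "a2 \<in> carrier R - N0" "c2 \<in> carrier R - N" using xy by blast
    have cc: "a1 \<in> carrier R" "c1 \<in> carrier R" "a2 \<in> carrier R" "c2 \<in> carrier R" using ac by auto
    have "a1 \<otimes> c1 \<otimes> (a2 \<otimes> c2) = (a1 \<otimes> a2) \<otimes> (c1 \<otimes> c2)" using cc by algebra
    moreover have "a1 \<otimes> a2 \<in> carrier R - N0" using ac primeideal.I_prime[OF PN(2)] by blast
    moreover have "c1 \<otimes> c2 \<in> carrier R - N" using ac primeideal.I_prime[OF PN(1)] by blast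
    ultimately show ?thesis using ac(1,4) Smem[of "a1 \<otimes> a2" "c1 \<otimes> c2"] by simp
  qed
  obtain P where P: "primeideal P R" "P \<inter> ?S = {}"
    using zorn_prime[OF zeroideal S IS one mult] by blast
  have Pc: "P \<subseteq> carrier R" using ideal.Icarr[OF primeideal.axioms(1)[OF P(1)]] by blast
  have PN0: "P \<subseteq> N0"
  proof
    fix p assume p: "p \<in> P"
    show "p \<in> N0"
    proof (rule ccontr)
      assume "p \<notin> N0"
      then have "p \<otimes> \<one> \<in> ?S" using p Pc maximal_one_notin[OF N] by (intro Smem) auto
      moreover have "p \<in> carrier R" using p Pc by blast
      ultimately have "p \<in> ?S" by simp
      then show False using P(2) p by blast
    qed
  qed
  have PN1: "P \<subseteq> N"
  proof
    fix p assume p: "p \<in> P"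
    show "p \<in> N"
    proof (rule ccontr)
      assume "p \<notin> N"
      then have "\<one> \<otimes> p \<in> ?S" using p Pc maximal_one_notin[OF N0] by (intro Smem) auto
      moreover have "p \<in> carrier R" using p Pc by blast
      ultimately have "p \<in> ?S" by simp
      then show False using P(2) p by blast
    qed
  qed
  have "\<exists>!M. maximalideal M R \<and> P \<subseteq> M" using pm P(1) unfolding pm_ring_def by simp
  then obtain M0 where "\<And>M. maximalideal M R \<and> P \<subseteq> M \<Longrightarrow> M = M0" by (auto simp: Ex1_def)
  then have "N = M0" "N0 = M0" using N N0 PN0 PN1 by auto
  then show False using ne by simp
qed

lemma (in cring) J_lemma:
  assumes T: "T \<subseteq> carrier R" "\<one> \<in> T" "\<And>x y. x\<in>T \<Longrightarrow> y\<in>T \<Longrightarrow> x \<otimes> y \<in> T"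
    and x: "x \<in> carrier R"
  shows "(\<exists>a\<in>T. \<exists>r\<in>carrier R. a = a \<otimes> (x \<otimes> r)) \<or>
     (\<exists>M. maximalideal M R \<and> x \<in> M \<and> (\<forall>c\<in>carrier R. (\<exists>a\<in>T. a \<otimes> c = \<zero>) \<longrightarrow> c \<in> M))"
proof (cases "\<exists>a\<in>T. \<exists>r\<in>carrier R. a = a \<otimes> (x \<otimes> r)")
  case True then show ?thesis by blast
next
  case False
  let ?J = "{t \<in> carrier R. \<exists>a\<in>T. \<exists>r\<in>carrier R. a \<otimes> t = a \<otimes> (x \<otimes> r)}"
  have memJ: "t \<in> ?J" if "t \<in> carrier R" "a \<in> T" "r \<in> carrier R" "a \<otimes> t = a \<otimes> (x \<otimes> r)" for t a r
    using that by blast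
  have J: "ideal ?J R"
  proof (rule idealI)
    show "ring R" by (rule ring_axioms)
    show "subgroup ?J (add_monoid R)"
    proof (rule add.subgroupI)
      show "?J \<subseteq> carrier R" by auto
      have "\<one> \<otimes> \<zero> = \<one> \<otimes> (x \<otimes> \<zero>)" using x by simp
      then have "\<zero> \<in> ?J" using T(2) x memJ[of "\<zero>" "\<one>" "\<zero>"] by auto
      then show "?J \<noteq> {}" by blast
    next
      fix t assume "t \<in> ?J"
      then obtain a r where ar: "t \<in> carrier R" "a \<in> T" "r \<in> carrier R" "a \<otimes> t = a \<otimes> (x \<otimes> r)" by blast
      have ac: "a \<in> carrier R" using ar T by blast
      have "a \<otimes> (\<ominus> t) = \<ominus> (a \<otimes> t)" using ar(1) ac by algebra
      also have "\<dots> = \<ominus> (a \<otimes> (x \<otimes> r))" by (simp only: ar(4))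
      also have "\<dots> = a \<otimes> (x \<otimes> (\<ominus> r))" using ar(1,3) ac x by algebra
      finally show "\<ominus> t \<in> ?J" using ar memJ[of "\<ominus> t" a "\<ominus> r"] by auto
    next
      fix t s assume "t \<in> ?J" "s \<in> ?J"
      then obtain a r b q where ar: "t \<in> carrier R" "a \<in> T" "r \<in> carrier R" "a \<otimes> t = a \<otimes> (x \<otimes> r)"
        "s \<in> carrier R" "b \<in> T" "q \<in> carrier R" "b \<otimes> s = b \<otimes> (x \<otimes> q)" by blast
      have ac: "a \<in> carrier R" "b \<in> carrier R" using ar T by blast+
      have "(a \<otimes> b) \<otimes> (t \<oplus> s) = b \<otimes> (a \<otimes> t) \<oplus> a \<otimes> (b \<otimes> s)" using ar(1,5) ac by algebra
      also have "\<dots> = b \<otimes> (a \<otimes> (x \<otimes> r)) \<oplus> a \<otimes> (b \<otimes> (x \<otimes> q))" by (simp only: ar(4) ar(8))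
      also have "\<dots> = (a \<otimes> b) \<otimes> (x \<otimes> (r \<oplus> q))" using ar(1,3,5,7) ac x by algebra
      finally show "t \<oplus> s \<in> ?J" using ar T(3)[of a b] memJ[of "t \<oplus> s" "a \<otimes> b" "r \<oplus> q"] by auto
    qed
  next
    fix t y assume "t \<in> ?J" and y: "y \<in> carrier R"
    then obtain a r where ar: "t \<in> carrier R" "a \<in> T" "r \<in> carrier R" "a \<otimes> t = a \<otimes> (x \<otimes> r)" by blast
    have ac: "a \<in> carrier R" using ar T by blast
    have "a \<otimes> (y \<otimes> t) = y \<otimes> (a \<otimes> t)" using ar(1) ac y by algebra
    also have "\<dots> = y \<otimes> (a \<otimes> (x \<otimes> r))" by (simp only: ar(4))
    also have "\<dots> = a \<otimes> (x \<otimes> (y \<otimes> r))" using ar(1,3) ac x y by algebra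
    finally show "y \<otimes> t \<in> ?J" using ar y memJ[of "y \<otimes> t" a "y \<otimes> r"] by auto
    have "a \<otimes> (t \<otimes> y) = y \<otimes> (a \<otimes> t)" using ar(1) ac y by algebra
    also have "\<dots> = y \<otimes> (a \<otimes> (x \<otimes> r))" by (simp only: ar(4))
    also have "\<dots> = a \<otimes> (x \<otimes> (r \<otimes> y))" using ar(1,3) ac x y by algebra
    finally show "t \<otimes> y \<in> ?J" using ar y memJ[of "t \<otimes> y" a "r \<otimes> y"] by auto
  qed
  have "\<one> \<notin> ?J"
  proof
    assume "\<one> \<in> ?J"
    then obtain a r where ar: "a \<in> T" "r \<in> carrier R" "a \<otimes> \<one> = a \<otimes> (x \<otimes> r)" by blast
    then have "a = a \<otimes> (x \<otimes> r)" using T(1) by auto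
    then show False using False ar(1,2) by blast
  qed
  then obtain M where M: "maximalideal M R" "?J \<subseteq> M" using exists_maximal[OF J] by blast
  have "\<one> \<otimes> x = \<one> \<otimes> (x \<otimes> \<one>)" using x by simp
  then have xJ: "x \<in> ?J" using x T(2) memJ[of x "\<one>" "\<one>"] by auto
  have annM: "\<forall>c\<in>carrier R. (\<exists>a\<in>T. a \<otimes> c = \<zero>) \<longrightarrow> c \<in> M"
  proof (intro ballI impI)
    fix c assume c: "c \<in> carrier R" "\<exists>a\<in>T. a \<otimes> c = \<zero>"
    then obtain a where a: "a \<in> T" "a \<otimes> c = \<zero>" by blast
    have "a \<otimes> (x \<otimes> \<zero>) = \<zero>" using a T x by auto
    then have "c \<in> ?J" using a c x memJ[of c a "\<zero>"] by auto
    then show "c \<in> M" by (rule subsetD[OF M(2)])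
  qed
  have xM: "x \<in> M" by (rule subsetD[OF M(2) xJ])
  show ?thesis by (intro disjI2 exI[of _ M] conjI M(1) xM annM)
qed




lemma prime_one_notin:
  assumes "primeideal P R" shows "\<one>\<^bsub>R\<^esub> \<notin> P"
proof
  assume "\<one>\<^bsub>R\<^esub> \<in> P"
  then have "P = carrier R" using ideal.one_imp_carrier[OF primeideal.axioms(1)[OF assms]] by blast
  then show False using primeideal.I_notcarr[OF assms] by simp
qed

lemma zariski_topspace:
  assumes "cring R"
  shows "topspace (zariski R) = Spec R"
proof -
  have one: "\<one>\<^bsub>R\<^esub> \<in> carrier R" using assms by (simp add: cring.axioms(1) ring.ring_simprules(6))
  have "Spec R - zariski_V R {\<one>\<^bsub>R\<^esub>} = Spec R"
    unfolding zariski_V_def Spec_def using prime_one_notin by auto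
  then have "Spec R \<in> {Spec R - zariski_V R S | S. S \<subseteq> carrier R}" using one by blast
  then show ?thesis unfolding zariski_def by auto
qed

lemma max_in_spec:
  assumes "cring R" shows "MaxSpec R \<subseteq> Spec R"
  unfolding MaxSpec_def Spec_def using cring.maximalideal_prime[OF assms] by blast

lemma max_zariski_topspace:
  assumes "cring R" shows "topspace (max_zariski R) = MaxSpec R"
  unfolding max_zariski_def using zariski_topspace[OF assms] max_in_spec[OF assms] by auto

lemma max_zariski_openI:
  assumes W: "W \<subseteq> MaxSpec R"
    and H: "\<And>p. p \<in> W \<Longrightarrow> \<exists>x\<in>carrier R. x \<notin> p \<and> (\<forall>q\<in>MaxSpec R. x \<notin> q \<longrightarrow> q \<in> W)"
    and R: "cring R"
  shows "openin (max_zariski R) W"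
proof -
  define G where "G = {x \<in> carrier R. \<forall>q\<in>MaxSpec R. x \<notin> q \<longrightarrow> q \<in> W}"
  define T where "T = (\<Union>x\<in>G. Spec R - zariski_V R {x})"
  have "openin (zariski R) T"
    unfolding T_def zariski_def
  proof (rule openin_Union, clarify)
    fix x assume "x \<in> G"
    then have "{x} \<subseteq> carrier R" unfolding G_def by auto
    then have "Spec R - zariski_V R {x} \<in> {Spec R - zariski_V R S | S. S \<subseteq> carrier R}" by blast
    then show "openin (topology_generated_by {Spec R - zariski_V R S | S. S \<subseteq> carrier R}) (Spec R - zariski_V R {x})"
      by (rule topology_generated_by_Basis)
  qed
  moreover have "W = T \<inter> MaxSpec R"
  proof
    show "W \<subseteq> T \<inter> MaxSpec R"
    proof
      fix p assume p: "p \<in> W"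
      then obtain x where x: "x \<in> carrier R" "x \<notin> p" "\<forall>q\<in>MaxSpec R. x \<notin> q \<longrightarrow> q \<in> W" using H by blast
      have "x \<in> G" using x unfolding G_def by blast
      moreover have "p \<in> Spec R" using p W max_in_spec[OF R] by blast
      ultimately have "p \<in> T" unfolding T_def zariski_V_def using x(2) by blast
      then show "p \<in> T \<inter> MaxSpec R" using p W by blast
    qed
    show "T \<inter> MaxSpec R \<subseteq> W"
    proof
      fix q assume q: "q \<in> T \<inter> MaxSpec R"
      then obtain x where x: "x \<in> G" "q \<in> Spec R - zariski_V R {x}" unfolding T_def by blast
      then have "x \<notin> q" unfolding zariski_V_def by blast
      then show "q \<in> W" using x(1) q unfolding G_def by blast
    qed
  qed
  ultimately show ?thesis unfolding max_zariski_def openin_subtopology by blast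
qed

lemma continuous_into_max_zariski:
  assumes R: "cring R"
    and f: "\<And>x. x \<in> topspace TT \<Longrightarrow> f x \<in> MaxSpec R"
    and H: "\<And>S. S \<subseteq> carrier R \<Longrightarrow> openin TT {x \<in> topspace TT. f x \<in> Spec R - zariski_V R S}"
  shows "continuous_map TT (max_zariski R) f"
  unfolding continuous_map_def
proof (intro conjI allI impI)
  show "f \<in> topspace TT \<rightarrow> topspace (max_zariski R)"
    using f max_zariski_topspace[OF R] by auto
  fix U assume "openin (max_zariski R) U"
  then obtain T where T: "openin (zariski R) T" "U = T \<inter> MaxSpec R"
    unfolding max_zariski_def openin_subtopology by blast
  have gen: "generate_topology_on {Spec R - zariski_V R S | S. S \<subseteq> carrier R} T"
    using T(1) unfolding zariski_def openin_topology_generated_by_iff .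
  have "openin TT {x \<in> topspace TT. f x \<in> T}"
    using gen
  proof (induction rule: generate_topology_on.induct)
    case Empty
    then show ?case by simp
  next
    case (Int a b)
    have "{x \<in> topspace TT. f x \<in> a \<inter> b} = {x \<in> topspace TT. f x \<in> a} \<inter> {x \<in> topspace TT. f x \<in> b}" by blast
    then show ?case using Int by (simp add: openin_Int)
  next
    case (UN K)
    have "{x \<in> topspace TT. f x \<in> \<Union>K} = (\<Union>k\<in>K. {x \<in> topspace TT. f x \<in> k})" by blast
    then show ?case using UN by (auto intro!: openin_Union)
  next
    case (Basis s)
    then obtain S where "s = Spec R - zariski_V R S" "S \<subseteq> carrier R" by blast
    then show ?case using H by simp
  qed
  moreover have "{x \<in> topspace TT. f x \<in> U} = {x \<in> topspace TT. f x \<in> T}" using T(2) f by blast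
  ultimately show "openin TT {x \<in> topspace TT. f x \<in> U}" by simp
qed

lemma zariski_closure_mem:
  assumes R: "cring R" and P: "P \<in> Spec R" and Q: "Q \<in> Spec R" and PQ: "P \<subseteq> Q"
  shows "Q \<in> zariski R closure_of {P}"
proof -
  have "P \<in> T" if T: "openin (zariski R) T" "Q \<in> T" for T
  proof -
    have gen: "generate_topology_on {Spec R - zariski_V R S | S. S \<subseteq> carrier R} T"
      using T(1) unfolding zariski_def openin_topology_generated_by_iff .
    have "Q \<in> T \<longrightarrow> P \<in> T"
      using gen
    proof (induction rule: generate_topology_on.induct)
      case Empty then show ?case by simp
    next
      case (Int a b) then show ?case by blast
    next
      case (UN K) then show ?case by blast
    next
      case (Basis s)
      then obtain S where s: "s = Spec R - zariski_V R S" by blast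
      show ?case unfolding s zariski_V_def using P PQ by blast
    qed
    then show ?thesis using T(2) by blast
  qed
  then show ?thesis unfolding closure_of_def using zariski_topspace[OF R] Q by blast
qed

lemma wcn_check:
  "weak_completely_normal_subring A B \<longleftrightarrow>
     (\<forall>M M'. maximalideal M B \<longrightarrow> maximalideal M' B \<longrightarrow> M \<noteq> M' \<longrightarrow>
        \<not> (M \<inter> A \<subseteq> M' \<inter> A) \<longrightarrow> \<not> (M' \<inter> A \<subseteq> M \<inter> A) \<longrightarrow>
        (Abstract_Topology.closure_of (zariski (B\<lparr>carrier := A\<rparr>)) {M \<inter> A}) \<inter>
        (Abstract_Topology.closure_of (zariski (B\<lparr>carrier := A\<rparr>)) {M' \<inter> A}) = {})"
  unfolding weak_completely_normal_subring_def by (rule refl)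



context cring begin

lemma sub_cring: assumes "subring A R" shows "cring (R\<lparr>carrier := A\<rparr>)"
  using subcring_iff[OF subringE(1)[OF assms]] subcringI'[OF assms] by simp

lemma sub_a_inv: assumes A: "subring A R" and a: "a \<in> A" shows "\<ominus>\<^bsub>R\<lparr>carrier := A\<rparr>\<^esub> a = \<ominus> a"
proof -
  interpret A': ring "R\<lparr>carrier := A\<rparr>" using subring_is_ring[OF A] .
  have c: "A \<subseteq> carrier R" "\<ominus> a \<in> A" using subringE(1,5)[OF A] a by auto
  have "\<ominus> a \<oplus> a = \<zero>" using c a by (simp add: l_neg subsetD)
  then show ?thesis using A'.minus_equality[of "\<ominus> a" a] a c(2) by simp
qed

lemma prime_contract:
  assumes A: "subring A R" and Q: "primeideal Q R"
  shows "primeideal (Q \<inter> A) (R\<lparr>carrier := A\<rparr>)"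
proof -
  interpret Q: primeideal Q R by fact
  have cA: "cring (R\<lparr>carrier := A\<rparr>)" by (rule sub_cring[OF A])
  interpret A': cring "R\<lparr>carrier := A\<rparr>" by (rule cA)
  have Ac: "A \<subseteq> carrier R" using subringE(1)[OF A] .
  have "ideal (Q \<inter> A) (R\<lparr>carrier := A\<rparr>)"
  proof (rule idealI)
    show "ring (R\<lparr>carrier := A\<rparr>)" by (rule A'.ring_axioms)
    show "subgroup (Q \<inter> A) (add_monoid (R\<lparr>carrier := A\<rparr>))"
    proof (rule A'.add.subgroupI)
      show "Q \<inter> A \<subseteq> carrier (R\<lparr>carrier := A\<rparr>)" by simp
      show "Q \<inter> A \<noteq> {}" using Q.zero_closed subringE(2)[OF A] by blast
    next
      fix a assume a: "a \<in> Q \<inter> A"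
      then show "\<ominus>\<^bsub>R\<lparr>carrier := A\<rparr>\<^esub> a \<in> Q \<inter> A"
        using sub_a_inv[OF A] Q.a_inv_closed subringE(5)[OF A] by simp
    next
      fix a b assume "a \<in> Q \<inter> A" "b \<in> Q \<inter> A"
      then show "a \<oplus>\<^bsub>R\<lparr>carrier := A\<rparr>\<^esub> b \<in> Q \<inter> A" using Q.a_closed subringE(7)[OF A] by simp
    qed
  next
    fix a x assume "a \<in> Q \<inter> A" "x \<in> carrier (R\<lparr>carrier := A\<rparr>)"
    then show "x \<otimes>\<^bsub>R\<lparr>carrier := A\<rparr>\<^esub> a \<in> Q \<inter> A" using Q.I_l_closed subringE(6)[OF A] Ac by auto
  next
    fix a x assume "a \<in> Q \<inter> A" "x \<in> carrier (R\<lparr>carrier := A\<rparr>)"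
    then show "a \<otimes>\<^bsub>R\<lparr>carrier := A\<rparr>\<^esub> x \<in> Q \<inter> A" using Q.I_r_closed subringE(6)[OF A] Ac by auto
  qed
  moreover have "carrier (R\<lparr>carrier := A\<rparr>) \<noteq> Q \<inter> A"
    using subringE(3)[OF A] prime_one_notin[OF Q] by auto
  moreover have "a \<in> Q \<inter> A \<or> b \<in> Q \<inter> A"
    if "a \<in> carrier (R\<lparr>carrier := A\<rparr>)" "b \<in> carrier (R\<lparr>carrier := A\<rparr>)" "a \<otimes>\<^bsub>R\<lparr>carrier := A\<rparr>\<^esub> b \<in> Q \<inter> A" for a b
    using that Q.I_prime Ac by auto
  ultimately show ?thesis by (intro primeidealI cA) auto
qed

lemma rad_prime:
  assumes Q: "primeideal Q R" and x: "x \<in> carrier R"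
  shows "x \<in> ring_rad R Q \<longleftrightarrow> x \<in> Q"
proof
  assume "x \<in> ring_rad R Q"
  then obtain n :: nat where n: "x [^] n \<in> Q" unfolding ring_rad_def by blast
  have "x [^] n \<in> Q \<Longrightarrow> x \<in> Q" for n :: nat
  proof (induction n)
    case 0 then show ?case using prime_one_notin[OF Q] by simp
  next
    case (Suc n)
    then have "x [^] n \<otimes> x \<in> Q" by simp
    then have "x [^] n \<in> Q \<or> x \<in> Q" using primeideal.I_prime[OF Q] x by simp
    then show ?case using Suc.IH by blast
  qed
  then show "x \<in> Q" using n by blast
next
  assume "x \<in> Q"
  then have "x [^] (1::nat) \<in> Q" using x by simp
  then show "x \<in> ring_rad R Q" unfolding ring_rad_def using x by blast
qed

end



locale setting = cring +
  fixes A :: "'a set"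
  assumes sub: "subring A R"
    and pm: "pm_ring (R\<lparr>carrier := A\<rparr>)"
    and dense: "dense_subring A R"
    and wcn: "weak_completely_normal_subring A R"
begin

abbreviation AR where "AR \<equiv> R\<lparr>carrier := A\<rparr>"

lemma cA: "cring AR" by (rule sub_cring[OF sub])
lemma Ac: "A \<subseteq> carrier R" by (rule subringE(1)[OF sub])
lemma oneA: "\<one> \<in> A" by (rule subringE(3)[OF sub])
lemma zeroA: "\<zero> \<in> A" by (rule subringE(2)[OF sub])
lemma multA: "a \<in> A \<Longrightarrow> b \<in> A \<Longrightarrow> a \<otimes> b \<in> A" by (rule subringE(6)[OF sub])
lemma addA: "a \<in> A \<Longrightarrow> b \<in> A \<Longrightarrow> a \<oplus> b \<in> A" by (rule subringE(7)[OF sub])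
lemma negA: "a \<in> A \<Longrightarrow> \<ominus> a \<in> A" by (rule subringE(5)[OF sub])

lemma maxB_prime: "maximalideal M R \<Longrightarrow> primeideal M R" by (rule maximalideal_prime)
lemma maxA_prime: "maximalideal N AR \<Longrightarrow> primeideal N AR" by (rule cring.maximalideal_prime[OF cA])

lemma contr: "maximalideal M R \<Longrightarrow> primeideal (M \<inter> A) AR"
  by (rule prime_contract[OF sub maxB_prime])

lemma pm_unique:
  assumes P: "primeideal P AR" and N1: "maximalideal N1 AR" "P \<subseteq> N1" and N2: "maximalideal N2 AR" "P \<subseteq> N2"
  shows "N1 = N2"
proof -
  have "\<exists>!M. maximalideal M AR \<and> P \<subseteq> M" using pm P unfolding pm_ring_def by simp
  then obtain M0 where "\<And>M. maximalideal M AR \<and> P \<subseteq> M \<Longrightarrow> M = M0" by (auto simp: Ex1_def)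
  then have "N1 = M0" "N2 = M0" using N1 N2 by auto
  then show ?thesis by simp
qed

lemma pm_ex:
  assumes P: "primeideal P AR" shows "\<exists>!N. maximalideal N AR \<and> P \<subseteq> N"
  using pm P unfolding pm_ring_def by simp

lemma primeA_mult:
  assumes N: "primeideal N AR" and a: "a \<in> A - N" and b: "b \<in> A - N"
  shows "a \<otimes> b \<in> A - N"
proof -
  have "a \<otimes> b \<in> A" using a b multA by blast
  moreover have "a \<otimes> b \<notin> N"
  proof
    assume "a \<otimes> b \<in> N"
    then have "a \<otimes>\<^bsub>AR\<^esub> b \<in> N" by simp
    then have "a \<in> N \<or> b \<in> N" by (intro primeideal.I_prime[OF N]) (use a b in simp_all)
    then show False using a b by blast
  qed
  ultimately show ?thesis by blast
qed

lemma incomp: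
  assumes M: "maximalideal M R" and M': "maximalideal M' R" and ne: "M \<noteq> M'"
  shows "\<not> (M \<inter> A \<subseteq> M' \<inter> A)"
proof
  assume sub1: "M \<inter> A \<subseteq> M' \<inter> A"
  have PM: "primeideal M R" "primeideal M' R" using maxB_prime M M' by auto
  have "\<not> M \<subseteq> M'"
  proof
    assume "M \<subseteq> M'"
    moreover have "M' \<subseteq> carrier R" using ideal.Icarr[OF maximalideal.axioms(1)[OF M']] by blast
    ultimately have "M' = M \<or> M' = carrier R"
      using maximalideal.I_maximal[OF M maximalideal.axioms(1)[OF M']] by blast
    then show False using ne maximalideal.I_notcarr[OF M'] by auto
  qed
  then obtain b where b: "b \<in> M" "b \<notin> M'" by blast
  have bc: "b \<in> carrier R" using ideal.Icarr[OF maximalideal.axioms(1)[OF M] b(1)] .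
  have "b \<in> carrier R - ring_rad R M'" using rad_prime[OF PM(2) bc] b bc by blast
  then obtain a where a: "a \<in> carrier R - ring_rad R M'" "a \<otimes> b \<in> A"
    using dense maximalideal.axioms(1)[OF M'] unfolding dense_subring_def by blast
  have ac: "a \<in> carrier R" "a \<notin> M'" using a(1) rad_prime[OF PM(2)] by auto
  have "a \<otimes> b \<in> M" using ideal.I_l_closed[OF maximalideal.axioms(1)[OF M] b(1) ac(1)] .
  then have "a \<otimes> b \<in> M'" using sub1 a(2) by blast
  then have "a \<in> M' \<or> b \<in> M'" using primeideal.I_prime[OF PM(2) ac(1) bc] by blast
  then show False using ac b by blast
qed

lemma inj:
  assumes M: "maximalideal M R" and M': "maximalideal M' R" and N: "maximalideal N AR"
    and MN: "M \<inter> A \<subseteq> N" and M'N: "M' \<inter> A \<subseteq> N"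
  shows "M = M'"
proof (rule ccontr)
  assume ne: "M \<noteq> M'"
  have i1: "\<not> (M \<inter> A \<subseteq> M' \<inter> A)" by (rule incomp[OF M M' ne])
  have i2: "\<not> (M' \<inter> A \<subseteq> M \<inter> A)" using incomp[OF M' M] ne by blast
  have disj: "(zariski AR closure_of {M \<inter> A}) \<inter> (zariski AR closure_of {M' \<inter> A}) = {}"
    using wcn M M' ne i1 i2 unfolding weak_completely_normal_subring_def by blast
  have NS: "N \<in> Spec AR" using maxA_prime[OF N] unfolding Spec_def by simp
  have "N \<in> zariski AR closure_of {M \<inter> A}"
    using zariski_closure_mem[OF cA _ NS MN] contr[OF M] unfolding Spec_def by simp
  moreover have "N \<in> zariski AR closure_of {M' \<inter> A}"
    using zariski_closure_mem[OF cA _ NS M'N] contr[OF M'] unfolding Spec_def by simp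
  ultimately show False using disj by blast
qed

lemma surj:
  assumes N: "maximalideal N AR"
  shows "\<exists>M. maximalideal M R \<and> M \<inter> A \<subseteq> N"
proof -
  have PN: "primeideal N AR" by (rule maxA_prime[OF N])
  have zN: "\<zero> \<in> N" using additive_subgroup.zero_closed[OF ideal.axioms(1)[OF maximalideal.axioms(1)[OF N]]] by simp
  have oN: "\<one> \<notin> N" using prime_one_notin[OF PN] by simp
  have S: "A - N \<subseteq> carrier R" using Ac by blast
  have IS: "{\<zero>} \<inter> (A - N) = {}" using zN by blast
  have one: "\<one> \<in> A - N" using oneA oN by blast
  obtain Q where Q: "primeideal Q R" "Q \<inter> (A - N) = {}"
    using zorn_prime[OF zeroideal S IS one primeA_mult[OF PN]] by blast
  have QN: "Q \<inter> A \<subseteq> N" using Q(2) by blast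
  have "\<one> \<notin> Q" by (rule prime_one_notin[OF Q(1)])
  then obtain M where M: "maximalideal M R" "Q \<subseteq> M"
    using exists_maximal[OF primeideal.axioms(1)[OF Q(1)]] by blast
  obtain N' where N': "maximalideal N' AR" "M \<inter> A \<subseteq> N'" using pm_ex[OF contr[OF M(1)]] by blast
  have "N = N'"
    by (rule pm_unique[OF prime_contract[OF sub Q(1)] N QN N'(1)]) (use M(2) N'(2) in blast)
  then show ?thesis using M(1) N'(2) by blast
qed

definition psi where "psi M = (THE N. maximalideal N AR \<and> M \<inter> A \<subseteq> N)"
definition theta where "theta N = (THE M. maximalideal M R \<and> M \<inter> A \<subseteq> N)"

lemma psi_prop:
  assumes M: "maximalideal M R" shows "maximalideal (psi M) AR \<and> M \<inter> A \<subseteq> psi M"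
  unfolding psi_def by (rule theI'[OF pm_ex[OF contr[OF M]]])

lemma psi_eq:
  assumes M: "maximalideal M R" and N: "maximalideal N AR" "M \<inter> A \<subseteq> N" shows "psi M = N"
  unfolding psi_def using the1_equality[OF pm_ex[OF contr[OF M]]] N by blast

lemma theta_ex1: assumes N: "maximalideal N AR" shows "\<exists>!M. maximalideal M R \<and> M \<inter> A \<subseteq> N"
  using surj[OF N] inj[OF _ _ N] by blast

lemma theta_prop:
  assumes N: "maximalideal N AR" shows "maximalideal (theta N) R \<and> theta N \<inter> A \<subseteq> N"
  unfolding theta_def by (rule theI'[OF theta_ex1[OF N]])

lemma theta_eq:
  assumes N: "maximalideal N AR" and M: "maximalideal M R" "M \<inter> A \<subseteq> N" shows "theta N = M"
  unfolding theta_def using the1_equality[OF theta_ex1[OF N]] M by blast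

lemma psi_theta: "maximalideal N AR \<Longrightarrow> psi (theta N) = N"
  using theta_prop psi_eq by blast

lemma theta_psi: "maximalideal M R \<Longrightarrow> theta (psi M) = M"
  using psi_prop theta_eq by blast

end



context setting begin

lemma psi_cont: "continuous_map (max_zariski R) (max_zariski AR) psi"
proof (rule continuous_into_max_zariski[OF cA])
  have top: "topspace (max_zariski R) = MaxSpec R" by (rule max_zariski_topspace[OF is_cring])
  fix M assume "M \<in> topspace (max_zariski R)"
  then have "maximalideal M R" using top unfolding MaxSpec_def by simp
  then show "psi M \<in> MaxSpec AR" using psi_prop unfolding MaxSpec_def by blast
next
  have top: "topspace (max_zariski R) = MaxSpec R" by (rule max_zariski_topspace[OF is_cring])
  fix S assume S: "S \<subseteq> carrier AR"
  show "openin (max_zariski R) {M \<in> topspace (max_zariski R). psi M \<in> Spec AR - zariski_V AR S}"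
  proof (rule max_zariski_openI[OF _ _ is_cring])
    show "{M \<in> topspace (max_zariski R). psi M \<in> Spec AR - zariski_V AR S} \<subseteq> MaxSpec R" using top by blast
    fix M0 assume M0: "M0 \<in> {M \<in> topspace (max_zariski R). psi M \<in> Spec AR - zariski_V AR S}"
    then have M0m: "maximalideal M0 R" and nV: "psi M0 \<notin> zariski_V AR S"
      using top unfolding MaxSpec_def by auto
    define N0 where "N0 = psi M0"
    have N0: "maximalideal N0 AR" "M0 \<inter> A \<subseteq> N0" using psi_prop[OF M0m] unfolding N0_def by auto
    have PN0: "primeideal N0 AR" by (rule maxA_prime[OF N0(1)])
    obtain s where s: "s \<in> S" "s \<notin> N0" using nV PN0 unfolding zariski_V_def Spec_def N0_def by blast
    have sA: "s \<in> A" using s S by auto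
    have T: "A - N0 \<subseteq> carrier AR" "\<one>\<^bsub>AR\<^esub> \<in> A - N0"
      "\<And>x y. x \<in> A - N0 \<Longrightarrow> y \<in> A - N0 \<Longrightarrow> x \<otimes>\<^bsub>AR\<^esub> y \<in> A - N0"
      using oneA prime_one_notin[OF PN0] primeA_mult[OF PN0] by auto
    have sc: "s \<in> carrier AR" using sA by simp
    have J: "(\<exists>a\<in>A - N0. \<exists>r\<in>A. a = a \<otimes> (s \<otimes> r)) \<or>
      (\<exists>N. maximalideal N AR \<and> s \<in> N \<and> (\<forall>c\<in>A. (\<exists>a\<in>A - N0. a \<otimes> c = \<zero>) \<longrightarrow> c \<in> N))"
      using cring.J_lemma[OF cA T sc] by simp
    then show "\<exists>x\<in>carrier R. x \<notin> M0 \<and> (\<forall>q\<in>MaxSpec R. x \<notin> q \<longrightarrow>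
                 q \<in> {M \<in> topspace (max_zariski R). psi M \<in> Spec AR - zariski_V AR S})"
    proof
      assume "\<exists>a\<in>A - N0. \<exists>r\<in>A. a = a \<otimes> (s \<otimes> r)"
      then obtain a r where a: "a \<in> A" "a \<notin> N0" "r \<in> A" "a = a \<otimes> (s \<otimes> r)" by blast
      have ac: "a \<in> carrier R" "r \<in> carrier R" "s \<in> carrier R" using a sA Ac by auto
      have aM0: "a \<notin> M0" using a N0(2) by blast
      have "q \<in> {M \<in> topspace (max_zariski R). psi M \<in> Spec AR - zariski_V AR S}"
        if q: "q \<in> MaxSpec R" "a \<notin> q" for q
      proof -
        have qm: "maximalideal q R" using q unfolding MaxSpec_def by simp
        have Pq: "primeideal q R" by (rule maxB_prime[OF qm])
        define ww where "ww = \<one> \<ominus> s \<otimes> r"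
        have oc: "ww \<in> carrier R" using ac unfolding ww_def by simp
        have oA: "ww \<in> A" unfolding ww_def a_minus_def using addA negA multA oneA sA a(3) by simp
        have "a \<otimes> ww = a \<ominus> a \<otimes> (s \<otimes> r)" unfolding ww_def using ac by algebra
        also have "\<dots> = a \<ominus> a" using a(4)[symmetric] by simp
        also have "\<dots> = \<zero>" using ac by (simp add: a_minus_def r_neg)
        finally have "a \<otimes> ww \<in> q"
          using additive_subgroup.zero_closed[OF ideal.axioms(1)[OF maximalideal.axioms(1)[OF qm]]] by simp
        then have oq: "ww \<in> q" using primeideal.I_prime[OF Pq ac(1) oc] q(2) by blast
        define N where "N = psi q"
        have N: "maximalideal N AR" "q \<inter> A \<subseteq> N" using psi_prop[OF qm] unfolding N_def by auto
        have oN: "ww \<in> N" using oq oA N(2) by blast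
        have "s \<notin> N"
        proof
          assume "s \<in> N"
          then have "s \<otimes>\<^bsub>AR\<^esub> r \<in> N" using ideal.I_r_closed[OF maximalideal.axioms(1)[OF N(1)]] a(3) by simp
          then have "ww \<oplus>\<^bsub>AR\<^esub> (s \<otimes>\<^bsub>AR\<^esub> r) \<in> N"
            using oN additive_subgroup.a_closed[OF ideal.axioms(1)[OF maximalideal.axioms(1)[OF N(1)]]] by blast
          moreover have "ww \<oplus> (s \<otimes> r) = \<one>" unfolding ww_def using ac by algebra
          ultimately have "\<one>\<^bsub>AR\<^esub> \<in> N" by simp
          then show False using prime_one_notin[OF maxA_prime[OF N(1)]] by simp
        qed
        then have "N \<notin> zariski_V AR S" using s(1) unfolding zariski_V_def by blast
        moreover have "N \<in> Spec AR" using maxA_prime[OF N(1)] unfolding Spec_def by simp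
        ultimately show ?thesis using q top unfolding N_def by simp
      qed
      then show ?thesis using ac(1) aM0 by blast
    next
      assume "\<exists>N. maximalideal N AR \<and> s \<in> N \<and> (\<forall>c\<in>A. (\<exists>a\<in>A - N0. a \<otimes> c = \<zero>) \<longrightarrow> c \<in> N)"
      then obtain N where N: "maximalideal N AR" "s \<in> N" "\<forall>c\<in>A. (\<exists>a\<in>A - N0. a \<otimes> c = \<zero>) \<longrightarrow> c \<in> N"
        by blast
      have "N \<noteq> N0" using N(2) s(2) by blast
      then obtain a c where ac: "a \<in> carrier AR - N0" "c \<in> carrier AR - N" "a \<otimes>\<^bsub>AR\<^esub> c = \<zero>\<^bsub>AR\<^esub>"
        using cring.pm_separation[OF cA pm N(1) N0(1)] by blast
      then have "c \<in> N" using N(3) by auto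
      then show ?thesis using ac(2) by blast
    qed
  qed
qed

lemma theta_cont: "continuous_map (max_zariski AR) (max_zariski R) theta"
proof (rule continuous_into_max_zariski[OF is_cring])
  have top: "topspace (max_zariski AR) = MaxSpec AR" by (rule max_zariski_topspace[OF cA])
  fix N assume "N \<in> topspace (max_zariski AR)"
  then have "maximalideal N AR" using top unfolding MaxSpec_def by simp
  then show "theta N \<in> MaxSpec R" using theta_prop unfolding MaxSpec_def by blast
next
  have top: "topspace (max_zariski AR) = MaxSpec AR" by (rule max_zariski_topspace[OF cA])
  fix S assume S: "S \<subseteq> carrier R"
  show "openin (max_zariski AR) {N \<in> topspace (max_zariski AR). theta N \<in> Spec R - zariski_V R S}"
  proof (rule max_zariski_openI[OF _ _ cA])
    show "{N \<in> topspace (max_zariski AR). theta N \<in> Spec R - zariski_V R S} \<subseteq> MaxSpec AR" using top by blast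
    fix N0 assume N0: "N0 \<in> {N \<in> topspace (max_zariski AR). theta N \<in> Spec R - zariski_V R S}"
    then have N0m: "maximalideal N0 AR" and nV: "theta N0 \<notin> zariski_V R S"
      using top unfolding MaxSpec_def by auto
    define M0 where "M0 = theta N0"
    have M0: "maximalideal M0 R" "M0 \<inter> A \<subseteq> N0" using theta_prop[OF N0m] unfolding M0_def by auto
    have PM0: "primeideal M0 R" by (rule maxB_prime[OF M0(1)])
    have PN0: "primeideal N0 AR" by (rule maxA_prime[OF N0m])
    obtain b where b: "b \<in> S" "b \<notin> M0" using nV PM0 unfolding zariski_V_def Spec_def M0_def by blast
    have bc: "b \<in> carrier R" using b S by auto
    have "b \<in> carrier R - ring_rad R M0" using rad_prime[OF PM0 bc] b bc by blast
    then obtain c where c: "c \<in> carrier R - ring_rad R M0" "c \<otimes> b \<in> A"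
      using dense maximalideal.axioms(1)[OF M0(1)] unfolding dense_subring_def by blast
    have cc: "c \<in> carrier R" "c \<notin> M0" using c(1) rad_prime[OF PM0] by auto
    define x where "x = c \<otimes> b"
    have xc: "x \<in> carrier R" unfolding x_def using cc bc by simp
    have xM0: "x \<notin> M0" unfolding x_def using primeideal.I_prime[OF PM0 cc(1) bc] cc(2) b(2) by blast
    have T: "A - N0 \<subseteq> carrier R" "\<one> \<in> A - N0"
      "\<And>x y. x \<in> A - N0 \<Longrightarrow> y \<in> A - N0 \<Longrightarrow> x \<otimes> y \<in> A - N0"
      using Ac oneA prime_one_notin[OF PN0] primeA_mult[OF PN0] by auto
    have J: "(\<exists>a\<in>A - N0. \<exists>r\<in>carrier R. a = a \<otimes> (x \<otimes> r)) \<or>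
      (\<exists>M. maximalideal M R \<and> x \<in> M \<and> (\<forall>c\<in>carrier R. (\<exists>a\<in>A - N0. a \<otimes> c = \<zero>) \<longrightarrow> c \<in> M))"
      by (rule J_lemma[OF T xc])
    then show "\<exists>y\<in>carrier AR. y \<notin> N0 \<and> (\<forall>q\<in>MaxSpec AR. y \<notin> q \<longrightarrow>
                 q \<in> {N \<in> topspace (max_zariski AR). theta N \<in> Spec R - zariski_V R S})"
    proof
      assume "\<exists>a\<in>A - N0. \<exists>r\<in>carrier R. a = a \<otimes> (x \<otimes> r)"
      then obtain a r where a: "a \<in> A" "a \<notin> N0" "r \<in> carrier R" "a = a \<otimes> (x \<otimes> r)" by blast
      have ac: "a \<in> carrier R" using a Ac by auto
      have "q \<in> {N \<in> topspace (max_zariski AR). theta N \<in> Spec R - zariski_V R S}"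
        if q: "q \<in> MaxSpec AR" "a \<notin> q" for q
      proof -
        have qm: "maximalideal q AR" using q unfolding MaxSpec_def by simp
        define M where "M = theta q"
        have M: "maximalideal M R" "M \<inter> A \<subseteq> q" using theta_prop[OF qm] unfolding M_def by auto
        interpret MI: ideal M R by (rule maximalideal.axioms(1)[OF M(1)])
        have "b \<notin> M"
        proof
          assume "b \<in> M"
          then have "x \<in> M" unfolding x_def using MI.I_l_closed cc(1) by blast
          then have "x \<otimes> r \<in> M" using MI.I_r_closed a(3) by blast
          then have "a \<otimes> (x \<otimes> r) \<in> M" using MI.I_l_closed ac by blast
          then have "a \<in> M" using a(4) by simp
          then show False using M(2) a(1) q(2) by blast
        qed
        then have "M \<notin> zariski_V R S" using b(1) unfolding zariski_V_def by blast
        moreover have "M \<in> Spec R" using maxB_prime[OF M(1)] unfolding Spec_def by simp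
        ultimately show ?thesis using q top unfolding M_def by simp
      qed
      then show ?thesis using a(1,2) by auto
    next
      assume "\<exists>M. maximalideal M R \<and> x \<in> M \<and> (\<forall>c\<in>carrier R. (\<exists>a\<in>A - N0. a \<otimes> c = \<zero>) \<longrightarrow> c \<in> M)"
      then obtain M where M: "maximalideal M R" "x \<in> M" "\<forall>c\<in>carrier R. (\<exists>a\<in>A - N0. a \<otimes> c = \<zero>) \<longrightarrow> c \<in> M"
        by blast
      have MM0: "M \<noteq> M0" using M(2) xM0 by blast
      define N where "N = psi M"
      have N: "maximalideal N AR" "M \<inter> A \<subseteq> N" using psi_prop[OF M(1)] unfolding N_def by auto
      have "N \<noteq> N0"
      proof
        assume "N = N0"
        then have "M = M0" using inj[OF M(1) M0(1) N0m] N(2) M0(2) by blast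
        then show False using MM0 by simp
      qed
      then obtain a c' where ac: "a \<in> carrier AR - N0" "c' \<in> carrier AR - N" "a \<otimes>\<^bsub>AR\<^esub> c' = \<zero>\<^bsub>AR\<^esub>"
        using cring.pm_separation[OF cA pm N(1) N0m] by blast
      then have "c' \<in> M" using M(3) Ac by auto
      then have "c' \<in> N" using N(2) ac(2) by auto
      then show ?thesis using ac(2) by blast
    qed
  qed
qed

lemma main: "max_zariski AR homeomorphic_space max_zariski R"
  unfolding homeomorphic_space_def homeomorphic_maps_def
proof (intro exI conjI)
  show "continuous_map (max_zariski AR) (max_zariski R) theta" by (rule theta_cont)
  show "continuous_map (max_zariski R) (max_zariski AR) psi" by (rule psi_cont)
  show "\<forall>x\<in>topspace (max_zariski AR). psi (theta x) = x"
    using psi_theta max_zariski_topspace[OF cA] unfolding MaxSpec_def by auto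
  show "\<forall>y\<in>topspace (max_zariski R). theta (psi y) = y"
    using theta_psi max_zariski_topspace[OF is_cring] unfolding MaxSpec_def by auto
qed

end

theorem theorem4p8:
  fixes B :: "('a, 'b) ring_scheme" and A :: "'a set"
  assumes "cring B"
    and "subring A B"
    and "pm_ring (B\<lparr>carrier := A\<rparr>)"
    and "dense_subring A B"
    and "weak_completely_normal_subring A B"
  shows "max_zariski (B\<lparr>carrier := A\<rparr>) homeomorphic_space max_zariski B"
proof -
  interpret S: setting B A
    unfolding setting_def setting_axioms_def using assms by blast
  show ?thesis by (rule S.main)
qed

end
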